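(* Fix $\varepsilon>0$ and an integer $r\ge100$ with $\frac{3r-1}{r-1}\left(\frac27-\frac\varepsilon2\right)<\frac67-\varepsilon$. Let $n^{0.99}<t<n$, $u=n-t$, let $\mathcal S$ be a $t$-intersecting family of partial permutations each of size at most $q$ ($t\le q\le n$) with peeling families $\mathcal T_k,\mathcal W_k$, let $1\le k\le\min(q-t,t^{2/7-\varepsilon/2})$, and let $A_1,\dots,A_r\in\mathcal W_k$ satisfy $|A_1\cap\cdots\cap A_r|=t-(r-2)k$. Set $\mathcal T_k'=\mathcal T_k\setminus\{T\subseteq A_1\cup\cdots\cup A_r:|T|=t+k\}$. Then, in the regime $t\to\infty$, $k\to\infty$, $k/u\to0$, uniformly over all $\mathcal F\subseteq\Sigma_n$, $$|\mathcal F[\mathcal T_k']|=o\Big(\max_{0\le j\le\lfloor (n-t)/2\rfloor}|\mathcal A_j|\Big).$$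
   Context: Each permutation $\sigma$ of $[n]$ is identified with the set $\{(i,\sigma(i)):i\in[n]\}\subseteq[n]^2$, and $\Sigma_n$ is the collection of these sets; a partial permutation is a subset of such a set. For a family $\mathcal F$ and a family $\mathcal T$, $\mathcal F[\mathcal T]=\{F\in\mathcal F: T\subseteq F\text{ for some }T\in\mathcal T\}$. A family is $t$-intersecting if any two (not necessarily distinct) members $A,B$ have $|A\cap B|\ge t$. $\mathcal A_j=\{F\in\Sigma_n: F \text{ contains at least } t+j \text{ elements of } \{(1,1),\dots,(t+2j,t+2j)\}\}$. A simplification of a $t$-intersecting family is any family obtained by repeatedly applying, in any order, the following operations until neither applies: (i) delete a member that is contained in another, different member; (ii) replace a member $S$ by a proper subset $X\subsetneq S$ provided the resulting family is still $t$-intersecting. Peeling: $\mathcal T_{q-t}$ is a simplification of $\mathcal S$, and for $k=q-t,q-t-1,\dots,1$, $\mathcal W_k=\{T\in\mathcal T_k:|T|=t+k\}$ and $\mathcal T_{k-1}$ is a simplification of $\mathcal T_k\setminus\mathcal W_k$ (any choices of simplifications are allowed). *)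

theory Defs
  imports Main "HOL-Analysis.Analysis"
begin

type_synonym cell = "nat \<times> nat"

definition Sigma_n :: "nat \<Rightarrow> cell set set" where
  "Sigma_n n = {{(i, \<sigma> i) | i. i \<in> {1..n}} | \<sigma>. bij_betw \<sigma> {1..n} {1..n}}"

definition partial_perm :: "nat \<Rightarrow> cell set \<Rightarrow> bool" where
  "partial_perm n P \<longleftrightarrow> (\<exists>F \<in> Sigma_n n. P \<subseteq> F)"

definition generated :: "cell set set \<Rightarrow> cell set set \<Rightarrow> cell set set" where
  "generated \<F> \<T> = {F \<in> \<F>. \<exists>T \<in> \<T>. T \<subseteq> F}"

definition t_intersecting :: "nat \<Rightarrow> cell set set \<Rightarrow> bool" where
  "t_intersecting t \<F> \<longleftrightarrow> (\<forall>A \<in> \<F>. \<forall>B \<in> \<F>. card (A \<inter> B) \<ge> t)"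

definition A_fam :: "nat \<Rightarrow> nat \<Rightarrow> nat \<Rightarrow> cell set set" where
  "A_fam n t j = {F \<in> Sigma_n n. card (F \<inter> {(i, i) | i. i \<in> {1..t + 2*j}}) \<ge> t + j}"

definition simp_step :: "nat \<Rightarrow> cell set set \<Rightarrow> cell set set \<Rightarrow> bool" where
  "simp_step t \<F> \<G> \<longleftrightarrow>
     (\<exists>A \<in> \<F>. \<exists>B \<in> \<F>. A \<noteq> B \<and> A \<subseteq> B \<and> \<G> = \<F> - {A}) \<or>
     (\<exists>S \<in> \<F>. \<exists>X. X \<subset> S \<and> \<G> = (\<F> - {S}) \<union> {X} \<and> t_intersecting t \<G>)"

definition simplification :: "nat \<Rightarrow> cell set set \<Rightarrow> cell set set \<Rightarrow> bool" where
  "simplification t \<S> \<T> \<longleftrightarrow> (simp_step t)\<^sup>*\<^sup>* \<S> \<T> \<and> \<not> (\<exists>\<G>. simp_step t \<T> \<G>)"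

definition W_fam :: "nat \<Rightarrow> (nat \<Rightarrow> cell set set) \<Rightarrow> nat \<Rightarrow> cell set set" where
  "W_fam t \<T> k = {T \<in> \<T> k. card T = t + k}"

definition peeling :: "nat \<Rightarrow> nat \<Rightarrow> cell set set \<Rightarrow> (nat \<Rightarrow> cell set set) \<Rightarrow> bool" where
  "peeling t q \<S> \<T> \<longleftrightarrow> simplification t \<S> (\<T> (q - t)) \<and>
     (\<forall>k \<in> {1..q - t}. simplification t (\<T> k - W_fam t \<T> k) (\<T> (k - 1)))"

end

theory Submission
  imports Defs "HOL-Combinatorics.Permutations"
begin

definition G :: "nat \<Rightarrow> (nat \<Rightarrow> nat) \<Rightarrow> cell set" where
  "G n p = {(i, p i) | i. i \<in> {1..n}}"

lemma Sigma_n_eq: "Sigma_n n = G n ` {p. p permutes {1..n}}"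
proof
  show "Sigma_n n \<subseteq> G n ` {p. p permutes {1..n}}"
  proof
    fix s assume "s \<in> Sigma_n n"
    then obtain f where s: "s = {(i, f i) | i. i \<in> {1..n}}" and b: "bij_betw f {1..n} {1..n}"
      unfolding Sigma_n_def by blast
    define p where "p x = (if x \<in> {1..n} then f x else x)" for x
    have "bij_betw p {1..n} {1..n}" using b unfolding p_def
      by (smt (verit, best) bij_betw_cong)
    hence "p permutes {1..n}" by (intro bij_imp_permutes) (auto simp: p_def)
    moreover have "s = G n p" unfolding s G_def p_def by auto
    ultimately show "s \<in> G n ` {p. p permutes {1..n}}" by blast
  qed
next
  show "G n ` {p. p permutes {1..n}} \<subseteq> Sigma_n n"
    unfolding Sigma_n_def G_def using permutes_imp_bij by blast
qed

lemma finite_G: "finite (G n p)"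
proof -
  have "G n p = (\<lambda>i. (i, p i)) ` {1..n}" unfolding G_def by auto
  thus ?thesis by simp
qed

lemma G_inj:
  assumes "p permutes {1..n}" "q permutes {1..n}" "G n p = G n q"
  shows "p = q"
proof
  fix x show "p x = q x"
  proof (cases "x \<in> {1..n}")
    case True
    hence "(x, p x) \<in> G n q" using assms(3) unfolding G_def by blast
    thus ?thesis unfolding G_def by auto
  next
    case False thus ?thesis using assms(1,2) by (simp add: permutes_not_in)
  qed
qed

lemma permutes_fix_diff:
  assumes "p permutes S" "\<forall>x\<in>D. p x = x"
  shows "p permutes (S - D)"
  using assms unfolding permutes_def by (metis Diff_iff)

lemma perms_containing:
  assumes "finite W"
  shows "card {s \<in> Sigma_n n. W \<subseteq> s} \<le> fact (n - card W)"
proof (cases "{s \<in> Sigma_n n. W \<subseteq> s} = {}")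
  case True thus ?thesis by (simp only: card.empty)
next
  case False
  then obtain f0 where f0: "f0 permutes {1..n}" "W \<subseteq> G n f0"
    unfolding Sigma_n_eq by blast
  define D where "D = fst ` W"
  have WD: "W = (\<lambda>i. (i, f0 i)) ` D" using f0(2) unfolding D_def G_def by force
  have cardD: "card D = card W" unfolding D_def
  proof (rule card_image, rule inj_onI)
    fix x y assume "x \<in> W" "y \<in> W" "fst x = fst y"
    then obtain i j where "x = (i, f0 i)" "y = (j, f0 j)" using f0(2) \<open>x \<in> W\<close> \<open>y \<in> W\<close> unfolding G_def by blast
    thus "x = y" using \<open>fst x = fst y\<close> by simp
  qed
  have Dsub: "D \<subseteq> {1..n}" using f0(2) unfolding D_def G_def by auto
  have "{s \<in> Sigma_n n. W \<subseteq> s} \<subseteq> (\<lambda>p. G n (f0 \<circ> p)) ` {p. p permutes ({1..n} - D)}"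
  proof
    fix s assume "s \<in> {s \<in> Sigma_n n. W \<subseteq> s}"
    then obtain f where f: "f permutes {1..n}" "s = G n f" "W \<subseteq> G n f"
      unfolding Sigma_n_eq by blast
    have agree: "f i = f0 i" if "i \<in> D" for i
    proof -
      have "(i, f0 i) \<in> W" using that WD by blast
      hence "(i, f0 i) \<in> G n f" using f(3) by blast
      thus ?thesis unfolding G_def by auto
    qed
    define p where "p = inv f0 \<circ> f"
    have pp: "p permutes {1..n}" unfolding p_def
      by (intro permutes_compose f(1) permutes_inv f0(1))
    have "\<forall>x\<in>D. p x = x" unfolding p_def using agree permutes_inverses(2)[OF f0(1)] by simp
    hence "p permutes ({1..n} - D)" using permutes_fix_diff pp by blast
    moreover have "f0 \<circ> p = f" unfolding p_def using permutes_inverses(1)[OF f0(1)]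
      by (auto simp: fun_eq_iff)
    ultimately show "s \<in> (\<lambda>p. G n (f0 \<circ> p)) ` {p. p permutes ({1..n} - D)}"
      using f(2) by blast
  qed
  hence "card {s \<in> Sigma_n n. W \<subseteq> s} \<le> card ((\<lambda>p. G n (f0 \<circ> p)) ` {p. p permutes ({1..n} - D)})"
    by (intro card_mono finite_imageI) (auto intro: finite_permutations)
  also have "\<dots> \<le> card {p. p permutes ({1..n} - D)}" 
    by (intro card_image_le) (auto intro: finite_permutations)
  also have "\<dots> = fact (n - card W)"
    using card_permutations[of "{1..n} - D" "n - card W"] Dsub cardD
    by (simp add: card_Diff_subset finite_subset)
  finally show ?thesis .
qed

lemma perm_noFix_card:
  assumes "finite R" "D \<subseteq> R" "card R = Suc c"
  shows "real (card {p. p permutes R \<and> (\<forall>x\<in>D. p x \<noteq> x)}) \<ge> fact (Suc c) - real (card D) * fact c"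
proof -
  have fin: "finite D" using assms finite_subset by blast
  have "{p. p permutes R} \<subseteq> {p. p permutes R \<and> (\<forall>x\<in>D. p x \<noteq> x)} \<union> (\<Union>x\<in>D. {p. p permutes (R - {x})})"
  proof
    fix p assume "p \<in> {p. p permutes R}"
    hence pR: "p permutes R" by simp
    show "p \<in> {p. p permutes R \<and> (\<forall>x\<in>D. p x \<noteq> x)} \<union> (\<Union>x\<in>D. {p. p permutes (R - {x})})"
    proof (cases "\<forall>x\<in>D. p x \<noteq> x")
      case True thus ?thesis using pR by simp
    next
      case False
      then obtain x where "x \<in> D" "p x = x" by blast
      hence "p permutes (R - {x})" using permutes_fix_diff[OF pR, of "{x}"] by simp
      thus ?thesis using \<open>x \<in> D\<close> by blast
    qed
  qed
  hence "card {p. p permutes R} \<le> card ({p. p permutes R \<and> (\<forall>x\<in>D. p x \<noteq> x)} \<union> (\<Union>x\<in>D. {p. p permutes (R - {x})}))"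
    by (intro card_mono) (auto intro!: finite_permutations assms(1) fin)
  also have "\<dots> \<le> card {p. p permutes R \<and> (\<forall>x\<in>D. p x \<noteq> x)} + card (\<Union>x\<in>D. {p. p permutes (R - {x})})"
    by (rule card_Un_le)
  also have "card (\<Union>x\<in>D. {p. p permutes (R - {x})}) \<le> (\<Sum>x\<in>D. card {p. p permutes (R - {x})})"
    by (rule card_UN_le[OF fin])
  also have "(\<Sum>x\<in>D. card {p. p permutes (R - {x})}) = (\<Sum>x\<in>D. fact c)"
  proof (rule sum.cong[OF refl])
    fix x assume "x \<in> D"
    hence "card (R - {x}) = c" using assms by auto
    thus "card {p. p permutes (R - {x})} = fact c" using card_permutations assms(1) by blast
  qed
  finally have "fact (Suc c) \<le> card {p. p permutes R \<and> (\<forall>x\<in>D. p x \<noteq> x)} + card D * fact c"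
    using card_permutations[OF assms(3,1)] by simp
  hence "real (fact (Suc c)) \<le> real (card {p. p permutes R \<and> (\<forall>x\<in>D. p x \<noteq> x)} + card D * fact c)"
    by (rule of_nat_mono)
  hence "real (fact (Suc c)) \<le> real (card {p. p permutes R \<and> (\<forall>x\<in>D. p x \<noteq> x)}) + real (card D) * real (fact c)"
    by simp
  thus ?thesis by (simp add: of_nat_fact algebra_simps)
qed

definition Diag :: "nat \<Rightarrow> cell set" where "Diag N = {(i, i) | i. i \<in> {1..N}}"

lemma A_fam_lower:
  assumes "3 * m \<le> n - t" "t < n"
  shows "real ((t + 2*m) choose m) * fact (n - t - m) \<le> 2 * real (card (A_fam n t m))"
proof -
  define N where "N = {1..t + 2*m}"
  define SS where "SS = {S. S \<subseteq> N \<and> card S = t + m}"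
  define P where "P S = {p. p permutes ({1..n} - S) \<and> (\<forall>x\<in>N - S. p x \<noteq> x)}" for S
  define c where "c = n - t - m - 1"
  have Nn: "N \<subseteq> {1..n}" unfolding N_def using assms by auto
  have finSS: "finite SS" unfolding SS_def N_def by simp
  have cardSS: "card SS = (t + 2*m) choose m"
    unfolding SS_def using n_subsets[of N "t+m"] binomial_symmetric[of "t+m" "t+2*m"]
    by (simp add: N_def)
  have diag: "G n p \<inter> Diag (t + 2*m) = {(i, i) | i. i \<in> S}" if "S \<in> SS" "p \<in> P S" for S p
  proof -
    have pp: "p permutes ({1..n} - S)" and nf: "\<forall>x\<in>N - S. p x \<noteq> x" using that(2) unfolding P_def by auto
    have SN: "S \<subseteq> N" using that(1) unfolding SS_def by auto
    have "p i = i" if "i \<in> S" for i using pp that by (simp add: permutes_not_in)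
    thus ?thesis using nf SN Nn unfolding G_def Diag_def N_def by auto
  qed
  have cardS: "card {(i, i) | i. i \<in> S} = card S" for S :: "nat set"
  proof -
    have "{(i, i) | i. i \<in> S} = (\<lambda>i. (i, i)) ` S" by auto
    thus ?thesis by (simp add: card_image inj_on_def)
  qed
  have sub: "(\<Union>S\<in>SS. G n ` P S) \<subseteq> A_fam n t m"
  proof safe
    fix S p assume S: "S \<in> SS" and p: "p \<in> P S"
    have "p permutes ({1..n} - S)" using p unfolding P_def by auto
    hence "p permutes {1..n}" by (rule permutes_subset) auto
    hence "G n p \<in> Sigma_n n" unfolding Sigma_n_eq by blast
    moreover have "card (G n p \<inter> Diag (t + 2*m)) = t + m"
      using diag[OF S p] cardS S unfolding SS_def by simp
    ultimately show "G n p \<in> A_fam n t m" unfolding A_fam_def Diag_def by simp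
  qed
  have Pfin: "finite (P S)" for S unfolding P_def
    by (rule finite_subset[of _ "{p. p permutes ({1..n} - S)}"]) (auto intro: finite_permutations)
  have disj: "\<forall>S\<in>SS. \<forall>S'\<in>SS. S \<noteq> S' \<longrightarrow> G n ` P S \<inter> G n ` P S' = {}"
  proof (intro ballI impI)
    fix S S' assume SS': "S \<in> SS" "S' \<in> SS" "S \<noteq> S'"
    show "G n ` P S \<inter> G n ` P S' = {}"
    proof (rule ccontr)
      assume "G n ` P S \<inter> G n ` P S' \<noteq> {}"
      then obtain p p' where pp: "p \<in> P S" "p' \<in> P S'" "G n p = G n p'" by blast
      have "{(i, i) | i. i \<in> S} = {(i, i) | i. i \<in> S'}"
        using diag[OF SS'(1) pp(1)] diag[OF SS'(2) pp(2)] pp(3) by simp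
      hence "S = S'" by blast
      thus False using SS'(3) by simp
    qed
  qed
  have cardG: "card (G n ` P S) = card (P S)" if "S \<in> SS" for S
  proof (rule card_image, rule inj_onI)
    fix p q assume "p \<in> P S" "q \<in> P S" "G n p = G n q"
    moreover have "p permutes {1..n}" "q permutes {1..n}"
      using \<open>p \<in> P S\<close> \<open>q \<in> P S\<close> unfolding P_def by (auto intro: permutes_subset)
    ultimately show "p = q" using G_inj by blast
  qed
  have lowP: "real (card (P S)) \<ge> fact (Suc c) - real m * fact c" if "S \<in> SS" for S
  proof -
    have SN: "S \<subseteq> N" "card S = t + m" using that unfolding SS_def by auto
    have finS: "finite S" using SN N_def finite_subset by blast
    have "card (N - S) = m" using SN by (simp add: card_Diff_subset finite_subset N_def)
    moreover have "card ({1..n} - S) = Suc c" using SN Nn assms unfolding c_def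
      by (subst card_Diff_subset) (auto simp: finS)
    ultimately show ?thesis using perm_noFix_card[of "{1..n} - S" "N - S" c] Nn unfolding P_def by auto
  qed
  have "real (card (\<Union>S\<in>SS. G n ` P S)) = (\<Sum>S\<in>SS. real (card (P S)))"
    using card_UN_disjoint[OF finSS _ disj] Pfin cardG by simp
  also have "\<dots> \<ge> (\<Sum>S\<in>SS. fact (Suc c) - real m * fact c)"
    by (rule sum_mono) (rule lowP)
  finally have "real (card SS) * (fact (Suc c) - real m * fact c) \<le> real (card (A_fam n t m))"
  proof -
    assume h: "(\<Sum>S\<in>SS. fact (Suc c) - real m * fact c) \<le> real (card (\<Union>S\<in>SS. G n ` P S))"
    have "card (\<Union>S\<in>SS. G n ` P S) \<le> card (A_fam n t m)"
      by (rule card_mono[OF _ sub]) (simp add: A_fam_def Sigma_n_eq finite_permutations)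
    thus ?thesis using h by simp
  qed
  moreover have "fact (Suc c) \<le> 2 * (fact (Suc c) - real m * (fact c :: real))"
  proof -
    have "fact (Suc c) = real (Suc c) * fact c" by simp
    moreover have "2 * real m \<le> real (Suc c)" using assms unfolding c_def by linarith
    moreover have "2 * real m * fact c \<le> real (Suc c) * fact c"
      by (rule mult_right_mono) (use \<open>2 * real m \<le> real (Suc c)\<close> in auto)
    ultimately show ?thesis by (simp add: algebra_simps)
  qed
  moreover have "Suc c = n - t - m" unfolding c_def using assms by linarith
  ultimately show ?thesis using cardSS
  proof -
    assume a1: "real (card SS) * (fact (Suc c) - real m * fact c) \<le> real (card (A_fam n t m))"
      and a2: "fact (Suc c) \<le> 2 * (fact (Suc c) - real m * (fact c :: real))"
      and a3: "Suc c = n - t - m" and a4: "card SS = t + 2 * m choose m"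
    have "real (card SS) * fact (Suc c) \<le> real (card SS) * (2 * (fact (Suc c) - real m * fact c))"
      by (rule mult_left_mono[OF a2]) simp
    also have "\<dots> = 2 * (real (card SS) * (fact (Suc c) - real m * fact c))" by (simp only: mult.left_commute)
    also have "\<dots> \<le> 2 * real (card (A_fam n t m))" using a1 by (rule mult_left_mono) simp
    finally have "real (card SS) * fact (Suc c) \<le> 2 * real (card (A_fam n t m))" .
    thus ?thesis by (simp only: a3 a4)
  qed
qed

lemma t_int_subset: "t_intersecting t Y \<Longrightarrow> X \<subseteq> Y \<Longrightarrow> t_intersecting t X"
  unfolding t_intersecting_def by blast

lemma simp_step_inv:
  assumes "simp_step t X Y"
  shows "(\<forall>T\<in>Y. \<exists>T'\<in>X. T \<subseteq> T') \<and> (t_intersecting t X \<longrightarrow> t_intersecting t Y)"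
  using assms unfolding simp_step_def
proof (elim disjE bexE conjE exE)
  fix A B assume "A \<in> X" "B \<in> X" "A \<noteq> B" "A \<subseteq> B" "Y = X - {A}"
  hence "Y \<subseteq> X" by blast
  moreover have "\<forall>T\<in>Y. \<exists>T'\<in>X. T \<subseteq> T'" using \<open>Y \<subseteq> X\<close> by blast
  ultimately show ?thesis using t_int_subset[of t X Y] by blast
next
  fix S Z assume "S \<in> X" "Z \<subset> S" "Y = X - {S} \<union> {Z}" "t_intersecting t Y"
  have "\<forall>T\<in>Y. \<exists>T'\<in>X. T \<subseteq> T'"
  proof
    fix T assume "T \<in> Y"
    hence "T \<in> X \<or> T = Z" using \<open>Y = X - {S} \<union> {Z}\<close> by blast
    thus "\<exists>T'\<in>X. T \<subseteq> T'" using \<open>S \<in> X\<close> \<open>Z \<subset> S\<close> by auto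
  qed
  thus ?thesis using \<open>t_intersecting t Y\<close> by blast
qed

lemma simp_rtrancl_inv:
  assumes "(simp_step t)\<^sup>*\<^sup>* X Y"
  shows "(\<forall>T\<in>Y. \<exists>T'\<in>X. T \<subseteq> T') \<and> (t_intersecting t X \<longrightarrow> t_intersecting t Y)"
  using assms
proof (induction rule: rtranclp_induct)
  case base thus ?case by blast
next
  case (step Y Z)
  have a: "\<forall>T\<in>Z. \<exists>T'\<in>Y. T \<subseteq> T'" "t_intersecting t Y \<longrightarrow> t_intersecting t Z"
    using simp_step_inv[OF step(2)] by auto
  have "\<forall>T\<in>Z. \<exists>T'\<in>X. T \<subseteq> T'"
  proof
    fix T assume "T \<in> Z"
    then obtain T' where "T' \<in> Y" "T \<subseteq> T'" using a(1) by blast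
    then obtain T'' where "T'' \<in> X" "T' \<subseteq> T''" using step(3) by blast
    thus "\<exists>T'\<in>X. T \<subseteq> T'" using \<open>T \<subseteq> T'\<close> by blast
  qed
  thus ?case using a(2) step(3) by blast
qed

lemma simplification_inv:
  assumes "simplification t X Y" "t_intersecting t X" "\<forall>T\<in>X. finite T \<and> card T \<le> c"
  shows "t_intersecting t Y \<and> (\<forall>T\<in>Y. finite T \<and> card T \<le> c)"
proof -
  have h: "(\<forall>T\<in>Y. \<exists>T'\<in>X. T \<subseteq> T') \<and> (t_intersecting t X \<longrightarrow> t_intersecting t Y)"
    using assms(1) unfolding simplification_def by (intro simp_rtrancl_inv) (elim conjE)
  have "finite T \<and> card T \<le> c" if "T \<in> Y" for T
  proof -
    obtain T' where T': "T' \<in> X" "T \<subseteq> T'" using h \<open>T \<in> Y\<close> by blast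
    have "finite T'" "card T' \<le> c" using assms(3) T'(1) by auto
    thus ?thesis using T'(2) card_mono finite_subset le_trans by metis
  qed
  moreover have "t_intersecting t Y" using h assms(2) by (elim conjE) (rule mp)
  ultimately show ?thesis by (intro conjI ballI) auto
qed

lemma peeling_inv:
  assumes "peeling t q S T" "t_intersecting t S" "\<forall>X\<in>S. finite X \<and> card X \<le> q" "t \<le> q" "j \<le> q - t"
  shows "t_intersecting t (T j) \<and> (\<forall>X\<in>T j. finite X \<and> card X \<le> t + j)"
proof -
  have main: "i \<le> q - t \<Longrightarrow> t_intersecting t (T (q - t - i)) \<and> (\<forall>X\<in>T (q - t - i). finite X \<and> card X \<le> t + (q - t - i))" for i
  proof (induction i)
    case 0
    have "simplification t S (T (q - t))" using assms(1) unfolding peeling_def by (elim conjE)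
    moreover have "\<forall>X\<in>S. finite X \<and> card X \<le> t + (q - t)" using assms(3,4) by simp
    ultimately have "t_intersecting t (T (q - t)) \<and> (\<forall>X\<in>T (q - t). finite X \<and> card X \<le> t + (q - t))"
      by (rule simplification_inv[OF _ assms(2)])
    thus ?case by simp
  next
    case (Suc i)
    define k where "k = q - t - i"
    have k1: "k \<in> {1..q - t}" using Suc.prems unfolding k_def by auto
    have km: "k - 1 = q - t - Suc i" unfolding k_def by simp
    have IH: "t_intersecting t (T k) \<and> (\<forall>X\<in>T k. finite X \<and> card X \<le> t + k)"
      using Suc unfolding k_def by simp
    have sk: "simplification t (T k - W_fam t T k) (T (k - 1))"
      using assms(1) k1 unfolding peeling_def by (elim conjE) (erule bspec)
    have "t_intersecting t (T k - W_fam t T k)" using IH t_int_subset[of t "T k" "T k - W_fam t T k"] by auto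
    moreover have "\<forall>X\<in>T k - W_fam t T k. finite X \<and> card X \<le> t + (k - 1)"
    proof
      fix X assume X: "X \<in> T k - W_fam t T k"
      hence "finite X" "card X \<le> t + k" "card X \<noteq> t + k" using IH unfolding W_fam_def by auto
      thus "finite X \<and> card X \<le> t + (k - 1)" using k1 by auto
    qed
    ultimately have "t_intersecting t (T (k - 1)) \<and> (\<forall>X\<in>T (k - 1). finite X \<and> card X \<le> t + (k - 1))"
      by (rule simplification_inv[OF sk])
    thus ?case unfolding km .
  qed
  have "q - t - (q - t - j) = j" using assms(5) by simp
  thus ?thesis using main[of "q - t - j"] by simp
qed

locale cfg =
  fixes A :: "nat \<Rightarrow> cell set" and r k t :: nat
  assumes r3: "r \<ge> 3"
  and finA: "\<And>i. i \<in> {1..r} \<Longrightarrow> finite (A i)"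
  and cardA: "\<And>i. i \<in> {1..r} \<Longrightarrow> card (A i) = t + k"
  and pair: "\<And>i j. i \<in> {1..r} \<Longrightarrow> j \<in> {1..r} \<Longrightarrow> t \<le> card (A i \<inter> A j)"
  and cardC: "card (\<Inter>i\<in>{1..r}. A i) + (r - 2) * k = t"
begin

abbreviation "U \<equiv> \<Union>i\<in>{1..r}. A i"
abbreviation "C \<equiv> \<Inter>i\<in>{1..r}. A i"
definition deg :: "cell \<Rightarrow> nat" where "deg x = card {i \<in> {1..r}. x \<in> A i}"

lemma r3_mult: "(r - 1) * k = (r - 2) * k + k"
proof -
  have "r - 1 = Suc (r - 2)" using r3 by simp
  thus ?thesis by simp
qed

lemma finU: "finite U" using finA by blast

lemma C_sub: "i \<in> {1..r} \<Longrightarrow> C \<subseteq> A i" by blast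

lemma CU: "C \<subseteq> U"
proof -
  have "1 \<in> {1..r}" using r3 by simp
  thus ?thesis by blast
qed

lemma finC: "finite C" using CU finU finite_subset by blast

lemma card_diff_le: "i \<in> {1..r} \<Longrightarrow> j \<in> {1..r} \<Longrightarrow> card (A i - A j) \<le> k"
proof -
  assume ij: "i \<in> {1..r}" "j \<in> {1..r}"
  have "card (A i - A j) = card (A i) - card (A i \<inter> A j)"
    by (rule card_Diff_subset_Int) (use finA ij in auto)
  thus ?thesis using cardA[OF ij(1)] pair[OF ij] by linarith
qed

lemma card_AC: "i \<in> {1..r} \<Longrightarrow> card (A i - C) = (r - 1) * k"
proof -
  assume i: "i \<in> {1..r}"
  have "card (A i - C) = card (A i) - card C"
    by (rule card_Diff_subset) (use finC C_sub i in auto)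
  moreover have "(r - 1) * k = (r - 2) * k + k" using r3_mult by simp
  ultimately show ?thesis using cardA[OF i] cardC by linarith
qed

lemma miss_one:
  assumes x: "x \<in> U" and pq: "p \<in> {1..r}" "q \<in> {1..r}" "p \<noteq> q" "x \<notin> A p" "x \<notin> A q"
  shows False
proof -
  obtain i where i: "i \<in> {1..r}" "x \<in> A i" using x by blast
  have ip: "i \<noteq> p" "i \<noteq> q" using i pq by auto
  define J where "J = {1..r} - {i, q}"
  have sub: "A i - C \<subseteq> (\<Union>j\<in>J. A i - A j) \<union> ((A i - A q) - {x})"
  proof
    fix y assume y: "y \<in> A i - C"
    then obtain j where j: "j \<in> {1..r}" "y \<notin> A j" by blast
    have "j \<noteq> i" using j y by auto
    show "y \<in> (\<Union>j\<in>J. A i - A j) \<union> ((A i - A q) - {x})"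
    proof (cases "j = q")
      case False
      hence "j \<in> J" using j \<open>j \<noteq> i\<close> unfolding J_def by simp
      thus ?thesis using j y by blast
    next
      case True
      show ?thesis
      proof (cases "y = x")
        case True
        have "p \<in> J" using pq ip unfolding J_def by simp
        thus ?thesis using True pq(4) i(2) by blast
      next
        case False
        thus ?thesis using \<open>j = q\<close> j y by blast
      qed
    qed
  qed
  have finJ: "finite J" unfolding J_def by simp
  have cJ: "card J = r - 2"
  proof -
    have "{i, q} \<subseteq> {1..r}" using i pq by simp
    hence "card J = r - card {i, q}" unfolding J_def by (simp add: card_Diff_subset)
    thus ?thesis using ip by simp
  qed
  have "(r - 1) * k = card (A i - C)" using card_AC[OF i(1)] by simp
  also have "\<dots> \<le> card ((\<Union>j\<in>J. A i - A j) \<union> ((A i - A q) - {x}))"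
    by (rule card_mono[OF _ sub]) (use finA i(1) finJ in auto)
  also have "\<dots> \<le> card (\<Union>j\<in>J. A i - A j) + card ((A i - A q) - {x})" by (rule card_Un_le)
  also have "card (\<Union>j\<in>J. A i - A j) \<le> (\<Sum>j\<in>J. card (A i - A j))" by (rule card_UN_le[OF finJ])
  also have "\<dots> \<le> (\<Sum>j\<in>J. k)" by (rule sum_mono) (use card_diff_le i(1) J_def in auto)
  also have "card ((A i - A q) - {x}) = card (A i - A q) - 1"
    using i pq finA by (simp add: card_Diff_singleton)
  finally have "(r - 1) * k \<le> (r - 2) * k + (card (A i - A q) - 1)" using cJ by simp
  moreover have "card (A i - A q) \<le> k" using card_diff_le[OF i(1) pq(2)] .
  moreover have "0 < card (A i - A q)"
  proof (subst card_gt_0_iff)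
    have "x \<in> A i - A q" using i pq by simp
    thus "A i - A q \<noteq> {} \<and> finite (A i - A q)" using finA[OF i(1)] by blast
  qed
  moreover have "(r - 1) * k = (r - 2) * k + k" using r3_mult by simp
  ultimately show False by linarith
qed

lemma deg_ge: assumes "x \<in> U" shows "r \<le> deg x + 1"
proof -
  let ?P = "{i \<in> {1..r}. x \<in> A i}" and ?N = "{i \<in> {1..r}. x \<notin> A i}"
  have "card ?N \<le> Suc 0"
  proof (subst card_le_Suc0_iff_eq)
    show "finite ?N" by simp
    show "\<forall>a1\<in>?N. \<forall>a2\<in>?N. a1 = a2"
    proof (intro ballI)
      fix p q assume "p \<in> ?N" "q \<in> ?N"
      thus "p = q" using miss_one[OF assms, of p q] by auto
    qed
  qed
  moreover have "card ?P + card ?N = card {1..r}"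
  proof -
    have "?P \<union> ?N = {1..r}" by auto
    moreover have "?P \<inter> ?N = {}" by auto
    ultimately show ?thesis using card_Un_disjoint[of ?P ?N] by simp
  qed
  ultimately show ?thesis unfolding deg_def by simp
qed

lemma deg_C: assumes "x \<in> C" shows "deg x = r"
proof -
  have "{i \<in> {1..r}. x \<in> A i} = {1..r}" using assms by auto
  thus ?thesis unfolding deg_def by simp
qed

lemma deg_le: "deg x \<le> r"
  unfolding deg_def by (rule order_trans[OF card_mono[of "{1..r}"]]) auto

lemma deg_notC: assumes "x \<notin> C" shows "deg x + 1 \<le> r"
proof -
  obtain j where j: "j \<in> {1..r}" "x \<notin> A j" using assms by blast
  have "{i \<in> {1..r}. x \<in> A i} \<subset> {1..r}" using j by blast
  hence "card {i \<in> {1..r}. x \<in> A i} < card {1..r}" by (intro psubset_card_mono) auto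
  thus ?thesis unfolding deg_def by simp
qed

lemma double_count:
  assumes "finite B"
  shows "(\<Sum>i\<in>{1..r}. card (B \<inter> A i)) = (\<Sum>x\<in>B. deg x)"
proof -
  have "(\<Sum>i\<in>{1..r}. card (B \<inter> A i)) = (\<Sum>i\<in>{1..r}. \<Sum>x\<in>B. if x \<in> A i then 1 else 0)"
  proof (rule sum.cong[OF refl])
    fix i
    have "B \<inter> A i = {x \<in> B. x \<in> A i}" by auto
    hence "card (B \<inter> A i) = (\<Sum>x\<in>{x \<in> B. x \<in> A i}. 1)" by (simp only: card_eq_sum)
    also have "\<dots> = (\<Sum>x\<in>B. if x \<in> A i then 1 else 0)" by (rule sum.inter_filter[OF assms])
    finally show "card (B \<inter> A i) = (\<Sum>x\<in>B. if x \<in> A i then 1 else 0)" .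
  qed
  also have "\<dots> = (\<Sum>x\<in>B. \<Sum>i\<in>{1..r}. if x \<in> A i then 1 else 0)" by (rule sum.swap)
  also have "\<dots> = (\<Sum>x\<in>B. deg x)"
  proof (rule sum.cong[OF refl])
    fix x
    have "deg x = (\<Sum>i\<in>{i \<in> {1..r}. x \<in> A i}. 1)" unfolding deg_def by (simp only: card_eq_sum)
    also have "\<dots> = (\<Sum>i\<in>{1..r}. if x \<in> A i then 1 else 0)" by (rule sum.inter_filter) simp
    finally show "(\<Sum>i\<in>{1..r}. if x \<in> A i then 1 else 0) = deg x" by simp
  qed
  finally show ?thesis .
qed

lemma UC_bound: "card (U - C) \<le> r * k"
proof -
  have "(\<Sum>i\<in>{1..r}. card (U \<inter> A i)) = (\<Sum>i\<in>{1..r}. t + k)"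
  proof (rule sum.cong[OF refl])
    fix i assume "i \<in> {1..r}"
    hence "U \<inter> A i = A i" by blast
    thus "card (U \<inter> A i) = t + k" using cardA \<open>i \<in> {1..r}\<close> by simp
  qed
  hence e1: "(\<Sum>x\<in>U. deg x) = r * (t + k)" using double_count[OF finU] by simp
  have "(\<Sum>x\<in>U. deg x) = (\<Sum>x\<in>U - C. deg x) + (\<Sum>x\<in>C. deg x)"
    by (rule sum.subset_diff[OF CU finU])
  moreover have "(\<Sum>x\<in>C. deg x) = r * card C" using deg_C by simp
  moreover have "(\<Sum>x\<in>U - C. deg x) \<ge> (\<Sum>x\<in>U - C. r - 1)"
    by (rule sum_mono) (use deg_ge in force)
  ultimately have "(r - 1) * card (U - C) + r * card C \<le> r * (t + k)" using e1 by (simp add: mult.commute)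
  also have "r * (t + k) = r * card C + r * ((r - 1) * k)"
  proof -
    have "t + k = card C + (r - 1) * k" using cardC r3_mult by linarith
    thus ?thesis by (simp add: add_mult_distrib2)
  qed
  finally have "(r - 1) * card (U - C) \<le> (r - 1) * (r * k)" by simp
  thus ?thesis using r3 by simp
qed

lemma W_constraint:
  assumes W: "W \<subseteq> U" "card W = t + m" "card (C - W) = a" "\<forall>i\<in>{1..r}. t \<le> card (W \<inter> A i)"
  shows "a + (r - 2) * k \<le> (r - 1) * m"
proof -
  have finW: "finite W" using W(1) finU finite_subset by blast
  have "(\<Sum>i\<in>{1..r}. t) \<le> (\<Sum>i\<in>{1..r}. card (W \<inter> A i))" by (rule sum_mono) (use W(4) in blast)
  hence s1: "r * t \<le> (\<Sum>x\<in>W. deg x)" using double_count[OF finW] by simp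
  have "(\<Sum>x\<in>W. deg x) = (\<Sum>x\<in>W - (W \<inter> C). deg x) + (\<Sum>x\<in>W \<inter> C. deg x)"
    by (rule sum.subset_diff) (use finW in auto)
  moreover have "(\<Sum>x\<in>W \<inter> C. deg x) = r * card (W \<inter> C)" using deg_C by simp
  moreover have "(\<Sum>x\<in>W - (W \<inter> C). deg x) \<le> (\<Sum>x\<in>W - (W \<inter> C). r - 1)"
    by (rule sum_mono) (use deg_notC in force)
  ultimately have s2: "r * t \<le> (r - 1) * card (W - (W \<inter> C)) + r * card (W \<inter> C)" using s1 by (simp add: mult.commute)
  have c1: "card (W \<inter> C) + a = card C"
  proof -
    have "card C = card (C \<inter> W) + card (C - W)" by (rule card_Int_Diff[OF finC])
    thus ?thesis using W(3) by (simp add: Int_commute)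
  qed
  have c2: "card (W - (W \<inter> C)) + card (W \<inter> C) = t + m"
    using card_Diff_subset[of "W \<inter> C" W] finW W(2) card_mono[of W "W \<inter> C"] by auto
  define x where "x = card (W \<inter> C)"
  define y where "y = card (W - (W \<inter> C))"
  define c where "c = card C"
  have e1: "x + a = c" "y + x = t + m" "c + (r - 2) * k = t" "r * t \<le> (r - 1) * y + r * x"
    using c1 c2 cardC s2 unfolding x_def y_def c_def by auto
  have "r = (r - 2) + 2" using r3 by simp
  then obtain s where rs: "r = s + 2" by blast
  have r2: "r - 2 = s" "r - 1 = s + 1" using rs by auto
  have ty: "t = x + a + s * k" "y = a + s * k + m" using e1(1-3) unfolding r2 by linarith+
  have "(s + 2) * (x + a + s * k) \<le> (s + 1) * (a + s * k + m) + (s + 2) * x"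
    using e1(4) unfolding rs r2 ty[symmetric] by simp
  hence "a + s * k \<le> (s + 1) * m" by (simp add: algebra_simps)
  thus ?thesis unfolding r2 .
qed

lemma W_count:
  assumes k1: "1 \<le> k"
  shows "card {W. W \<subseteq> U \<and> card W = t + m \<and> card (C - W) = a \<and> (\<forall>i\<in>{1..r}. t \<le> card (W \<inter> A i))}
         \<le> (t choose a) * (r * k) ^ (2 * k - m - a)"
proof -
  define WW where "WW = {W. W \<subseteq> U \<and> card W = t + m \<and> card (C - W) = a \<and> (\<forall>i\<in>{1..r}. t \<le> card (W \<inter> A i))}"
  define b where "b = card (U - C) - ((r - 2) * k + m + a)"
  define \<phi> where "\<phi> W = (C - W, (U - C) - W)" for W :: "cell set"
  have inj: "inj_on \<phi> WW"
  proof (rule inj_onI)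
    fix W W' assume "W \<in> WW" "W' \<in> WW" "\<phi> W = \<phi> W'"
    hence "W \<subseteq> U" "W' \<subseteq> U" "C - W = C - W'" "(U - C) - W = (U - C) - W'" unfolding WW_def \<phi>_def by auto
    thus "W = W'" by blast
  qed
  have img: "\<phi> ` WW \<subseteq> {X. X \<subseteq> C \<and> card X = a} \<times> {Y. Y \<subseteq> U - C \<and> card Y = b}"
  proof
    fix z assume "z \<in> \<phi> ` WW"
    then obtain W where W: "W \<in> WW" "z = \<phi> W" by blast
    have W': "W \<subseteq> U" "card W = t + m" "card (C - W) = a" using W(1) unfolding WW_def by auto
    have finW: "finite W" using W'(1) finU finite_subset by blast
    have c1: "card (W \<inter> C) + a = card C"
    proof -
      have "card C = card (C \<inter> W) + card (C - W)" by (rule card_Int_Diff[OF finC])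
      thus ?thesis using W'(3) by (simp add: Int_commute)
    qed
    have c2: "card (W - C) + card (W \<inter> C) = t + m"
      using card_Int_Diff[OF finW, of C] W'(2) by simp
    have c3: "card ((U - C) - W) = card (U - C) - card (W - C)"
    proof -
      have "(U - C) - W = (U - C) - (W - C)" by blast
      moreover have "W - C \<subseteq> U - C" using W'(1) by blast
      ultimately show ?thesis using finU by (simp add: card_Diff_subset finite_subset)
    qed
    have "card (W - C) = (r - 2) * k + m + a" using c1 c2 cardC by linarith
    hence "card ((U - C) - W) = b" using c3 unfolding b_def by simp
    thus "z \<in> {X. X \<subseteq> C \<and> card X = a} \<times> {Y. Y \<subseteq> U - C \<and> card Y = b}"
      using W(2) W'(3) unfolding \<phi>_def by auto
  qed
  have "card WW = card (\<phi> ` WW)" using card_image[OF inj] by simp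
  also have "\<dots> \<le> card ({X. X \<subseteq> C \<and> card X = a} \<times> {Y. Y \<subseteq> U - C \<and> card Y = b})"
    by (rule card_mono[OF _ img]) (use finC finU in auto)
  also have "\<dots> = (card C choose a) * (card (U - C) choose b)"
    using n_subsets[OF finC] n_subsets[of "U - C"] finU by (simp add: card_cartesian_product)
  also have "\<dots> \<le> (t choose a) * (r * k) ^ (2 * k - m - a)"
  proof (rule mult_le_mono)
    show "card C choose a \<le> t choose a" by (rule binomial_right_mono) (use cardC in linarith)
    have "card (U - C) choose b \<le> card (U - C) ^ b"
      by (rule binomial_le_pow) (simp add: b_def)
    also have "\<dots> \<le> (r * k) ^ b" by (rule power_mono[OF UC_bound]) simp
    also have "\<dots> \<le> (r * k) ^ (2 * k - m - a)"
    proof (rule power_increasing)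
      have "r * k = (r - 2) * k + 2 * k" using r3 by (simp add: algebra_simps flip: add_mult_distrib)
      thus "b \<le> 2 * k - m - a" using UC_bound unfolding b_def by linarith
      show "1 \<le> r * k" using r3 k1 by simp
    qed
    finally show "card (U - C) choose b \<le> (r * k) ^ (2 * k - m - a)" .
  qed
  finally show ?thesis unfolding WW_def .
qed

end

lemma binom_step: "(t choose a) * (t - a) = (t choose Suc a) * Suc a"
proof (cases t)
  case 0 thus ?thesis by simp
next
  case (Suc n)
  have "(t - a) * (t choose a) = t * ((t - 1) choose a)" by (rule binomial_absorb_comp)
  moreover have "Suc a * (Suc n choose Suc a) = Suc n * (n choose a)" by (rule Suc_times_binomial)
  ultimately show ?thesis using Suc by (simp add: mult.commute)
qed

lemma binom_ratio_aux:
  "j + a = m \<Longrightarrow> m \<le> t \<Longrightarrow> (t choose a) * (t - m) ^ j \<le> (t choose m) * m ^ j"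
proof (induction j arbitrary: a)
  case 0 thus ?case by simp
next
  case (Suc j)
  have IH: "(t choose Suc a) * (t - m) ^ j \<le> (t choose m) * m ^ j" using Suc by simp
  have "(t choose a) * (t - m) ^ Suc j = ((t choose a) * (t - m)) * (t - m) ^ j" by simp
  also have "\<dots> \<le> ((t choose a) * (t - a)) * (t - m) ^ j" using Suc.prems by (intro mult_le_mono) auto
  also have "\<dots> = Suc a * ((t choose Suc a) * (t - m) ^ j)" unfolding binom_step by (simp add: algebra_simps)
  also have "\<dots> \<le> m * ((t choose m) * m ^ j)" using Suc.prems by (intro mult_le_mono[OF _ IH]) auto
  also have "\<dots> = (t choose m) * m ^ Suc j" by simp
  finally show ?case .
qed

lemma key_arith:
  fixes r k t m a :: nat and \<delta> :: real
  assumes r8: "r \<ge> 8" and mk: "m < k" and con: "a + (r - 2) * k \<le> (r - 1) * m"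
    and k7: "k ^ 7 \<le> t ^ 2" and kr: "4 * real r ^ 4 \<le> real k" and kd: "128 * real r ^ 12 \<le> \<delta> * real k"
    and tk: "2 * k \<le> t"
  shows "real (t choose a) * real ((r * k) ^ (2 * k - m - a)) * (2 * real k ^ 2) \<le> \<delta> * real (t choose m)"
proof -
  define d where "d = k - m"
  define e where "e = m - a"
  have "r = (r - 2) + 2" using r8 by simp
  then obtain s where rs: "r = s + 2" by blast
  have r2: "r - 2 = s" "r - 1 = s + 1" using rs by auto
  have kd': "k = m + d" unfolding d_def using mk by simp
  have "a + s * (m + d) \<le> (s + 1) * m" using con unfolding r2 kd'[symmetric] .
  hence c1': "a + s * d \<le> m" by (simp add: algebra_simps)
  hence c1: "a + (r - 2) * d \<le> m" unfolding r2 .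
  have d1: "d \<ge> 1" unfolding d_def using mk by simp
  have "6 * d \<le> (r - 2) * d" using r8 by (intro mult_le_mono) auto
  hence e6: "e \<ge> 6" "2 * d \<le> e" using c1 d1 unfolding e_def by linarith+
  have am: "a \<le> m" using c1 by linarith
  have b2: "2 * k - m - a \<le> 2 * e" using e6 am unfolding e_def kd' by arith
  have kpos: "k > 0" using mk by simp
  have mt: "m \<le> t" using mk tk by linarith
  define T where "T = real t - real m"
  have Tpos: "T \<ge> real t / 2" "T > 0" using mk tk kpos unfolding T_def by linarith+
  have tpos: "real t > 0" using tk kpos by simp
  define R where "R = real (r * k) ^ 2"
  have "0 < r * k" using r8 kpos by simp
  hence rk1: "1 \<le> real (r * k)" by linarith
  have R0: "R \<ge> 1" unfolding R_def using rk1 by (rule one_le_power)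
  define B where "B = real m * R / T"
  have B0: "B \<ge> 0" unfolding B_def using Tpos R0 by simp
  have rat: "real (t choose a) * T ^ e \<le> real (t choose m) * real m ^ e"
  proof -
    have "(t choose a) * (t - m) ^ e \<le> (t choose m) * m ^ e"
      by (rule binom_ratio_aux) (use am mt e_def in auto)
    hence "real ((t choose a) * (t - m) ^ e) \<le> real ((t choose m) * m ^ e)" by (rule of_nat_mono)
    thus ?thesis unfolding T_def using mt by (simp add: of_nat_diff)
  qed
  have step1: "real (t choose a) * real ((r * k) ^ (2 * k - m - a)) \<le> real (t choose a) * R ^ e"
  proof -
    have "real ((r * k) ^ (2 * k - m - a)) \<le> real (r * k) ^ (2 * e)"
      unfolding of_nat_power using b2 rk1 by (intro power_increasing) auto
    also have "\<dots> = R ^ e" unfolding R_def by (simp add: power_mult)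
    finally show ?thesis by (intro mult_left_mono) auto
  qed
  have step2: "real (t choose a) * R ^ e \<le> real (t choose m) * B ^ e"
  proof -
    have "real (t choose a) * R ^ e = (real (t choose a) * T ^ e) * (R / T) ^ e"
      using Tpos by (simp add: power_divide)
    also have "\<dots> \<le> (real (t choose m) * real m ^ e) * (R / T) ^ e"
      using rat Tpos R0 by (intro mult_right_mono) auto
    also have "\<dots> = real (t choose m) * B ^ e" unfolding B_def
      by (simp add: power_divide power_mult_distrib)
    finally show ?thesis .
  qed
  have B2: "B ^ 2 \<le> 4 * real r ^ 4 / real k"
  proof -
    have "B \<le> real k * R / (real t / 2)" unfolding B_def
      using Tpos R0 mk tpos by (intro frac_le mult_right_mono) auto
    also have "\<dots> = 2 * real r ^ 2 * real k ^ 3 / real t" unfolding R_def by (simp add: power2_eq_square field_simps eval_nat_numeral)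
    finally have "B ^ 2 \<le> (2 * real r ^ 2 * real k ^ 3 / real t) ^ 2" using B0 by (intro power_mono) auto
    also have "\<dots> = 4 * real r ^ 4 * real k ^ 6 / real t ^ 2" by (simp add: power_divide power_mult_distrib field_simps) 
    also have "\<dots> \<le> 4 * real r ^ 4 / real k"
    proof -
      have "real k ^ 7 \<le> real t ^ 2" using k7 by (metis of_nat_le_iff of_nat_power)
      moreover have "real t > 0" using tpos .
      moreover have "real k * (real k ^ 6 * real r ^ 4) \<le> (real t)\<^sup>2 * real r ^ 4"
      proof -
        have "real k * (real k ^ 6 * real r ^ 4) = real k ^ 7 * real r ^ 4"
          by (simp add: eval_nat_numeral mult_ac)
        also have "\<dots> \<le> (real t)\<^sup>2 * real r ^ 4" using \<open>real k ^ 7 \<le> real t ^ 2\<close> by (rule mult_right_mono) simp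
        finally show ?thesis .
      qed
      ultimately show ?thesis using kpos by (simp add: field_simps)
    qed
    finally show ?thesis .
  qed
  have B1: "B \<le> 1"
  proof -
    have "4 * real r ^ 4 / real k \<le> 1" using kr kpos by (simp add: divide_le_eq_1)
    hence "B ^ 2 \<le> 1" using B2 by linarith
    show ?thesis
    proof (rule ccontr)
      assume "\<not> B \<le> 1"
      hence "1 < B" by simp
      hence "1 < B * B" using less_1_mult by blast
      thus False using \<open>B ^ 2 \<le> 1\<close> by (simp add: power2_eq_square)
    qed
  qed
  have Be: "B ^ e \<le> (4 * real r ^ 4 / real k) ^ 3"
  proof -
    have "B ^ e \<le> B ^ 6" using B0 B1 e6 by (intro power_decreasing) auto
    also have "\<dots> = (B ^ 2) ^ 3" by (simp flip: power_mult)
    also have "\<dots> \<le> (4 * real r ^ 4 / real k) ^ 3" using B2 B0 by (intro power_mono) auto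
    finally show ?thesis .
  qed
  have "real (t choose a) * real ((r * k) ^ (2 * k - m - a)) * (2 * real k ^ 2)
        \<le> real (t choose m) * (4 * real r ^ 4 / real k) ^ 3 * (2 * real k ^ 2)"
  proof (rule mult_right_mono)
    show "real (t choose a) * real ((r * k) ^ (2 * k - m - a)) \<le> real (t choose m) * (4 * real r ^ 4 / real k) ^ 3"
      using step1 step2 Be by (meson order_trans mult_left_mono of_nat_0_le_iff)
  qed simp
  also have "\<dots> = real (t choose m) * (128 * real r ^ 12 / real k)"
    using kpos by (simp add: field_simps power_mult_distrib power_divide eval_nat_numeral)
  also have "\<dots> \<le> real (t choose m) * \<delta>"
    using kd kpos by (intro mult_left_mono) (auto simp: divide_le_eq)
  finally show ?thesis by (simp add: mult.commute)
qed

context cfg begin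

definition WW :: "nat \<Rightarrow> nat \<Rightarrow> cell set set" where
  "WW m a = {W. W \<subseteq> U \<and> card W = t + m \<and> card (C - W) = a \<and> (\<forall>i\<in>{1..r}. t \<le> card (W \<inter> A i))}"

lemma finWW: "finite (WW m a)"
proof (rule finite_subset[of _ "Pow U"])
  show "WW m a \<subseteq> Pow U" unfolding WW_def by blast
  show "finite (Pow U)" using finU by simp
qed

lemma reduction:
  assumes AK: "\<And>i. i \<in> {1..r} \<Longrightarrow> A i \<in> K" and tint: "t_intersecting t K"
    and Kc: "\<And>X. X \<in> K \<Longrightarrow> card X \<le> t + k"
    and FS: "F \<subseteq> Sigma_n n"
  shows "card (generated F (K - {T. T \<subseteq> U \<and> card T = t + k}))
         \<le> (\<Sum>m<k. \<Sum>a<k. card (WW m a) * fact (n - (t + m)))"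
proof -
  let ?K' = "K - {T. T \<subseteq> U \<and> card T = t + k}"
  let ?P = "\<lambda>W. {s \<in> Sigma_n n. W \<subseteq> s}"
  have sub: "generated F ?K' \<subseteq> (\<Union>m\<in>{..<k}. \<Union>a\<in>{..<k}. \<Union>W\<in>WW m a. ?P W)"
  proof
    fix s assume "s \<in> generated F ?K'"
    then obtain T where s: "s \<in> F" "T \<in> ?K'" "T \<subseteq> s" unfolding generated_def by blast
    have sS: "s \<in> Sigma_n n" using s(1) FS by blast
    have finT: "finite T"
    proof -
      obtain p where "s = G n p" using sS unfolding Sigma_n_eq by blast
      thus ?thesis using finite_G s(3) finite_subset by metis
    qed
    define W where "W = T \<inter> U"
    have TK: "T \<in> K" using s(2) by blast
    have WA: "t \<le> card (W \<inter> A i)" if i: "i \<in> {1..r}" for i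
    proof -
      have "W \<inter> A i = T \<inter> A i" unfolding W_def using i by blast
      moreover have "t \<le> card (T \<inter> A i)" using tint TK AK[OF i] unfolding t_intersecting_def by blast
      ultimately show ?thesis by simp
    qed
    have WU: "W \<subseteq> U" unfolding W_def by blast
    have finW: "finite W" unfolding W_def using finT by simp
    have Wlt: "card W < t + k"
    proof (cases "T \<subseteq> U")
      case True
      hence "W = T" unfolding W_def by blast
      moreover have "card T \<noteq> t + k" using s(2) True by blast
      ultimately show ?thesis using Kc[OF TK] by simp
    next
      case False
      hence "W \<subset> T" unfolding W_def by blast
      hence "card W < card T" using finT by (rule psubset_card_mono[rotated])
      thus ?thesis using Kc[OF TK] by simp
    qed
    have Wge: "t \<le> card W"
    proof -
      have "1 \<in> {1..r}" using r3 by simp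
      hence "t \<le> card (W \<inter> A 1)" by (rule WA)
      also have "\<dots> \<le> card W" using finW by (intro card_mono) auto
      finally show ?thesis .
    qed
    define m where "m = card W - t"
    define a where "a = card (C - W)"
    have m: "card W = t + m" "m < k" unfolding m_def using Wge Wlt by auto
    have con: "a + (r - 2) * k \<le> (r - 1) * m"
      by (rule W_constraint[OF WU m(1) a_def[symmetric]]) (use WA in blast)
    have "(r - 2) * m \<le> (r - 2) * k" using m(2) by simp
    moreover have "(r - 1) * m = (r - 2) * m + m"
    proof -
      have "r - 1 = Suc (r - 2)" using r3 by simp
      thus ?thesis by simp
    qed
    ultimately have "a \<le> m" using con by linarith
    hence "a < k" using m(2) by simp
    moreover have "W \<in> WW m a" unfolding WW_def using WU m(1) a_def WA by blast
    moreover have "s \<in> ?P W" using sS s(3) unfolding W_def by blast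
    ultimately show "s \<in> (\<Union>m\<in>{..<k}. \<Union>a\<in>{..<k}. \<Union>W\<in>WW m a. ?P W)" using m(2) by blast
  qed
  have fin_gen: "finite (\<Union>m\<in>{..<k}. \<Union>a\<in>{..<k}. \<Union>W\<in>WW m a. ?P W)"
    by (intro finite_UN_I finite_lessThan finWW) (simp add: Sigma_n_eq finite_permutations)
  have "card (generated F ?K') \<le> card (\<Union>m\<in>{..<k}. \<Union>a\<in>{..<k}. \<Union>W\<in>WW m a. ?P W)"
    by (rule card_mono[OF fin_gen sub])
  also have "\<dots> \<le> (\<Sum>m<k. card (\<Union>a\<in>{..<k}. \<Union>W\<in>WW m a. ?P W))" by (rule card_UN_le) simp
  also have "\<dots> \<le> (\<Sum>m<k. \<Sum>a<k. card (\<Union>W\<in>WW m a. ?P W))"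
    by (rule sum_mono) (rule card_UN_le, simp)
  also have "\<dots> \<le> (\<Sum>m<k. \<Sum>a<k. \<Sum>W\<in>WW m a. card (?P W))"
    by (intro sum_mono card_UN_le finWW)
  also have "\<dots> \<le> (\<Sum>m<k. \<Sum>a<k. \<Sum>W\<in>WW m a. fact (n - (t + m)))"
  proof (intro sum_mono)
    fix m a W assume "W \<in> WW m a"
    hence h: "card W = t + m" "W \<subseteq> U" unfolding WW_def by auto
    have "finite W" by (rule finite_subset[OF h(2) finU])
    note h = h(1) this
    thus "card (?P W) \<le> fact (n - (t + m))" using perms_containing[of W n] by simp
  qed
  also have "\<dots> = (\<Sum>m<k. \<Sum>a<k. card (WW m a) * fact (n - (t + m)))" by simp
  finally show ?thesis .
qed

end

lemma main_bound:
  fixes \<epsilon> \<delta> :: real and r :: nat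
  assumes eps: "\<epsilon> > 0" and r100: "r \<ge> 100" and dpos: "\<delta> > 0"
    and tn: "t < n" and tq: "t \<le> q"
    and Sh: "\<forall>S \<in> \<S>. partial_perm n S \<and> card S \<le> q" and Stint: "t_intersecting t \<S>"
    and peel: "peeling t q \<S> \<T>"
    and k1: "1 \<le> k" and kq: "k \<le> q - t" and kpow: "real k \<le> real t powr (2/7 - \<epsilon>/2)"
    and AW: "\<forall>i \<in> {1..r}. A i \<in> W_fam t \<T> k"
    and cardCi: "int (card (\<Inter>i \<in> {1..r}. A i)) = int t - (int r - 2) * int k"
    and FS: "\<F> \<subseteq> Sigma_n n"
    and tM: "real t \<ge> 4 * real r ^ 4 + 128 * real r ^ 12 / \<delta> + 2"
    and kM: "real k \<ge> 4 * real r ^ 4 + 128 * real r ^ 12 / \<delta> + 2"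
    and ku: "real k < 1/3 * real (n - t)"
  shows "real (card (generated \<F> (\<T> k - {T. T \<subseteq> (\<Union>i \<in> {1..r}. A i) \<and> card T = t + k})))
         \<le> \<delta> * real (Max ((\<lambda>j. card (A_fam n t j)) ` {0..(n - t) div 2}))"
proof -
  define Mx where "Mx = Max ((\<lambda>j. card (A_fam n t j)) ` {0..(n - t) div 2})"
  have Sfin: "\<forall>X\<in>\<S>. finite X \<and> card X \<le> q"
  proof
    fix X assume "X \<in> \<S>"
    hence "partial_perm n X" "card X \<le> q" using Sh by auto
    then obtain F where "F \<in> Sigma_n n" "X \<subseteq> F" unfolding partial_perm_def by blast
    then obtain p where "X \<subseteq> G n p" unfolding Sigma_n_eq by blast
    hence "finite X" using finite_G finite_subset by blast
    thus "finite X \<and> card X \<le> q" using \<open>card X \<le> q\<close> by simp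
  qed
  have PI: "t_intersecting t (\<T> k) \<and> (\<forall>X\<in>\<T> k. finite X \<and> card X \<le> t + k)"
    by (rule peeling_inv[OF peel Stint Sfin tq kq])
  have AK: "\<And>i. i \<in> {1..r} \<Longrightarrow> A i \<in> \<T> k" and cA: "\<And>i. i \<in> {1..r} \<Longrightarrow> card (A i) = t + k"
    using AW unfolding W_fam_def by auto
  have fA: "\<And>i. i \<in> {1..r} \<Longrightarrow> finite (A i)"
  proof -
    fix i assume "i \<in> {1..r}"
    hence "card (A i) = t + k" by (rule cA)
    hence "card (A i) > 0" using k1 by simp
    thus "finite (A i)" by (rule card_ge_0_finite)
  qed
  have tint: "t_intersecting t (\<T> k)" using PI by (rule conjunct1)
  have pr: "t \<le> card (A i \<inter> A j)" if "i \<in> {1..r}" "j \<in> {1..r}" for i j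
  proof -
    have "\<forall>X\<in>\<T> k. \<forall>Y\<in>\<T> k. t \<le> card (X \<inter> Y)" using tint unfolding t_intersecting_def .
    moreover have "A i \<in> \<T> k" "A j \<in> \<T> k" using AK that by auto
    ultimately show ?thesis by simp
  qed
  have cC: "card (\<Inter>i \<in> {1..r}. A i) + (r - 2) * k = t"
  proof -
    have "int r - 2 = int (r - 2)" using r100 by simp
    hence "int (card (\<Inter>i \<in> {1..r}. A i)) = int t - int (r - 2) * int k" using cardCi by (simp only:)
    hence "int (card (\<Inter>i \<in> {1..r}. A i)) + int (r - 2) * int k = int t" by linarith
    hence "int (card (\<Inter>i \<in> {1..r}. A i) + (r - 2) * k) = int t" by (simp only: of_nat_add of_nat_mult)
    thus ?thesis by (simp only: of_nat_eq_iff)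
  qed
  interpret cfg A r k t
  proof
    show "3 \<le> r" using r100 by simp
  next
    fix i assume "i \<in> {1..r}" thus "finite (A i)" by (rule fA)
  next
    fix i assume "i \<in> {1..r}" thus "card (A i) = t + k" by (rule cA)
  next
    fix i j assume "i \<in> {1..r}" "j \<in> {1..r}" thus "t \<le> card (A i \<inter> A j)" by (rule pr)
  next
    show "card (\<Inter>i \<in> {1..r}. A i) + (r - 2) * k = t" by (rule cC)
  qed
  have red: "card (generated \<F> (\<T> k - {T. T \<subseteq> U \<and> card T = t + k}))
         \<le> (\<Sum>m<k. \<Sum>a<k. card (WW m a) * fact (n - (t + m)))"
  proof (rule reduction[OF AK tint _ FS])
    fix X assume "X \<in> \<T> k" thus "card X \<le> t + k" using PI by simp
  qed
  have kpos: "real k > 0" using k1 by simp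
  have Mp1: "0 \<le> 128 * real r ^ 12 / \<delta>" using dpos by simp
  have Mp2: "0 \<le> 4 * real r ^ 4" by simp
  have "2 \<le> real k" using kM Mp1 Mp2 by linarith
  hence k2: "k \<ge> 2" by simp
  have tpos: "real t \<ge> 1" using tM Mp1 Mp2 by linarith
  have k7: "k ^ 7 \<le> t ^ 2"
  proof -
    have "real t powr (2/7 - \<epsilon>/2) \<le> real t powr (2/7)" by (rule powr_mono) (use eps tpos in auto)
    hence "real k \<le> real t powr (2/7)" using kpow by linarith
    hence "real k ^ 7 \<le> (real t powr (2/7)) ^ 7" by (rule power_mono) simp
    also have "\<dots> = real t powr (real 7 * (2/7))" using tpos by (subst powr_power) auto
    also have "\<dots> = real t ^ 2" by simp
    finally have "real (k ^ 7) \<le> real (t ^ 2)" by simp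
    thus ?thesis by (simp only: of_nat_le_iff)
  qed
  have tk: "2 * k \<le> t"
  proof -
    have "(2 * k) ^ 2 = 4 * k ^ 2" by (simp add: power_mult_distrib)
    also have "\<dots> \<le> k ^ 5 * k ^ 2"
    proof -
      have "2 ^ 5 \<le> k ^ 5" using k2 by (rule power_mono) simp
      hence "4 \<le> k ^ 5" by simp
      thus ?thesis by (intro mult_right_mono) simp_all
    qed
    also have "\<dots> = k ^ 7" by (simp flip: power_add)
    also have "\<dots> \<le> t ^ 2" by (rule k7)
    finally have "(2 * k) ^ 2 \<le> t ^ 2" .
    thus ?thesis by (rule power2_le_imp_le) simp
  qed
  have k3: "3 * k < n - t" using ku by linarith
  have r8: "r \<ge> 8" using r100 by simp
  have kr: "4 * real r ^ 4 \<le> real k" using kM Mp1 by linarith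
  have kd: "128 * real r ^ 12 \<le> \<delta> * real k"
  proof -
    have "128 * real r ^ 12 / \<delta> \<le> real k" using kM Mp2 by linarith
    thus ?thesis using dpos by (simp add: divide_le_eq mult.commute)
  qed
  have Mx0: "0 \<le> real Mx" by simp
  have termb: "real (card (WW m a) * fact (n - (t + m))) \<le> \<delta> / real k ^ 2 * real Mx"
    if mk: "m < k" and ak: "a < k" for m a
  proof (cases "WW m a = {}")
    case True
    thus ?thesis using Mx0 dpos by simp
  next
    case False
    then obtain W where W: "W \<in> WW m a" by blast
    have Wp: "W \<subseteq> U" "card W = t + m" "card (C - W) = a" "\<forall>i\<in>{1..r}. t \<le> card (W \<inter> A i)"
      using W unfolding WW_def by auto
    have con: "a + (r - 2) * k \<le> (r - 1) * m" by (rule W_constraint[OF Wp])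
    have cW: "card (WW m a) \<le> (t choose a) * (r * k) ^ (2 * k - m - a)"
      using W_count[OF k1, of m a] unfolding WW_def .
    define X where "X = real ((t choose a) * (r * k) ^ (2 * k - m - a))"
    define Fm where "Fm = real (fact (n - (t + m)) :: nat)"
    have Fm0: "Fm \<ge> 0" unfolding Fm_def by simp
    have ka: "X * (2 * real k ^ 2) \<le> \<delta> * real (t choose m)"
      unfolding X_def using key_arith[OF r8 mk con k7 kr kd tk] by simp
    have al: "real ((t + 2*m) choose m) * fact (n - t - m) \<le> 2 * real (card (A_fam n t m))"
      by (rule A_fam_lower) (use k3 mk tn in auto)
    have bm: "real (t choose m) \<le> real ((t + 2*m) choose m)" by (simp add: binomial_right_mono)
    have mMx: "card (A_fam n t m) \<le> Mx"
      unfolding Mx_def by (rule Max_ge) (use k3 mk in auto)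
    have cWX: "real (card (WW m a)) \<le> X" unfolding X_def by (rule of_nat_mono[OF cW])
    have "real (card (WW m a) * fact (n - (t + m))) = real (card (WW m a)) * Fm"
      unfolding Fm_def by (simp only: of_nat_mult)
    also have "\<dots> \<le> X * Fm" using cWX Fm0 by (rule mult_right_mono)
    finally have "real (card (WW m a) * fact (n - (t + m))) \<le> X * Fm" .
    moreover have "X * Fm * (2 * real k ^ 2) \<le> \<delta> * 2 * real (card (A_fam n t m))"
    proof -
      have "X * Fm * (2 * real k ^ 2) = (X * (2 * real k ^ 2)) * Fm" by simp
      also have "\<dots> \<le> (\<delta> * real ((t + 2*m) choose m)) * Fm"
        using ka bm dpos Fm0 by (intro mult_right_mono) (auto intro: order_trans mult_left_mono)
      also have "\<dots> = \<delta> * (real ((t + 2*m) choose m) * fact (n - t - m))"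
        unfolding Fm_def by (simp add: of_nat_fact)
      also have "\<dots> \<le> \<delta> * (2 * real (card (A_fam n t m)))" using al dpos by (intro mult_left_mono) auto
      finally show ?thesis by simp
    qed
    hence "X * Fm \<le> \<delta> * real (card (A_fam n t m)) / real k ^ 2"
      using kpos by (simp add: field_simps)
    also have "\<dots> \<le> \<delta> * real Mx / real k ^ 2"
      using mMx dpos kpos by (intro divide_right_mono mult_left_mono) auto
    finally show ?thesis by simp
  qed
  have "real (card (generated \<F> (\<T> k - {T. T \<subseteq> U \<and> card T = t + k})))
        \<le> real (\<Sum>m<k. \<Sum>a<k. card (WW m a) * fact (n - (t + m)))" using red by (rule of_nat_mono)
  also have "\<dots> = (\<Sum>m<k. \<Sum>a<k. real (card (WW m a) * fact (n - (t + m))))" by simp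
  also have "\<dots> \<le> (\<Sum>m<k. \<Sum>a<k. \<delta> / real k ^ 2 * real Mx)"
    by (intro sum_mono termb) auto
  also have "\<dots> = \<delta> * real Mx" using kpos by (simp add: power2_eq_square)
  finally show ?thesis unfolding Mx_def .
qed

lemma final_aux:
  fixes \<epsilon> :: real and r :: nat and \<delta> :: real
  assumes "\<epsilon> > 0" and "r \<ge> 100" and "\<delta> > 0"
  shows "\<exists>M::real. \<exists>\<eta>>0. \<forall>n t q k \<S> \<T> (A :: nat \<Rightarrow> cell set) \<F>.
     real n powr 0.99 < real t \<and> t < n \<and> t \<le> q \<and> q \<le> n \<and>
     (\<forall>S \<in> \<S>. partial_perm n S \<and> card S \<le> q) \<and> t_intersecting t \<S> \<and>
     peeling t q \<S> \<T> \<and>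
     1 \<le> k \<and> k \<le> q - t \<and> real k \<le> real t powr (2/7 - \<epsilon>/2) \<and>
     (\<forall>i \<in> {1..r}. A i \<in> W_fam t \<T> k) \<and>
     int (card (\<Inter>i \<in> {1..r}. A i)) = int t - (int r - 2) * int k \<and>
     \<F> \<subseteq> Sigma_n n \<and>
     real t \<ge> M \<and> real k \<ge> M \<and> real k < \<eta> * real (n - t)
     \<longrightarrow> real (card (generated \<F> (\<T> k - {T. T \<subseteq> (\<Union>i \<in> {1..r}. A i) \<and> card T = t + k})))
         \<le> \<delta> * real (Max ((\<lambda>j. card (A_fam n t j)) ` {0..(n - t) div 2}))"
  apply (rule exI[of _ "4 * real r ^ 4 + 128 * real r ^ 12 / \<delta> + 2"])
  apply (rule exI[of _ "1/3"])
  apply (intro conjI allI impI)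
   apply simp
  apply (elim conjE)
  apply (rule main_bound[OF assms(1,2,3)])
                  apply assumption+
  done

theorem corollary5p3:
  fixes \<epsilon> :: real and r :: nat
  assumes "\<epsilon> > 0" and "r \<ge> 100"
    and "(3 * real r - 1) / (real r - 1) * (2/7 - \<epsilon>/2) < 6/7 - \<epsilon>"
  shows "\<forall>\<delta>>0. \<exists>M::real. \<exists>\<eta>>0. \<forall>n t q k \<S> \<T> (A :: nat \<Rightarrow> cell set) \<F>.
     real n powr 0.99 < real t \<and> t < n \<and> t \<le> q \<and> q \<le> n \<and>
     (\<forall>S \<in> \<S>. partial_perm n S \<and> card S \<le> q) \<and> t_intersecting t \<S> \<and>
     peeling t q \<S> \<T> \<and>
     1 \<le> k \<and> k \<le> q - t \<and> real k \<le> real t powr (2/7 - \<epsilon>/2) \<and>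
     (\<forall>i \<in> {1..r}. A i \<in> W_fam t \<T> k) \<and>
     int (card (\<Inter>i \<in> {1..r}. A i)) = int t - (int r - 2) * int k \<and>
     \<F> \<subseteq> Sigma_n n \<and>
     real t \<ge> M \<and> real k \<ge> M \<and> real k < \<eta> * real (n - t)
     \<longrightarrow> real (card (generated \<F> (\<T> k - {T. T \<subseteq> (\<Union>i \<in> {1..r}. A i) \<and> card T = t + k})))
         \<le> \<delta> * real (Max ((\<lambda>j. card (A_fam n t j)) ` {0..(n - t) div 2}))"
  by (intro allI impI) (rule final_aux[OF assms(1,2)])

end
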